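(* For $n\ge1$ let $R_n=\{(x,y)\in\mathbb R^2: x-1/n<y<x+1/n\}$, and let $R$ be the pro-set given by the inverse system $(R_n)_{n\ge1}$ with inclusion maps, equipped with the monomorphism $R\to\mathbb R\times\mathbb R$ in $\operatorname{Pro}(\mathbf{Set})$ induced by the inclusions $R_n\subseteq\mathbb R^2$. Then $R$ is a categorical equivalence relation on $\mathbb R$ in $\operatorname{Pro}(\mathbf{Set})$, but it is not the kernel pair of any morphism in $\operatorname{Pro}(\mathbf{Set})$: every morphism $f\colon\mathbb R\to X$ in $\operatorname{Pro}(\mathbf{Set})$ whose kernel pair contains $R$ has kernel pair all of $\mathbb R\times\mathbb R$, while $R\to\mathbb R\times\mathbb R$ is not an isomorphism. In particular, $\operatorname{Pro}(\mathbf{Set})$ is not Barr exact.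
   Context: For a category $\mathcal C$, $\operatorname{Pro}(\mathcal C)$ is its pro-completion: objects are inverse systems, i.e. functors $X\colon \mathcal I_X^{op}\to\mathcal C$ with $\mathcal I_X$ a small filtered category, and $\operatorname{Hom}_{\operatorname{Pro}(\mathcal C)}(X,Y)=\varprojlim_{j\in\mathcal I_Y}\varinjlim_{i\in\mathcal I_X}\mathcal C(X_i,Y_j)$; sets are regarded as one-index inverse systems. A categorical equivalence relation on an object $X$ of a finitely complete category $\mathcal C$ is a monomorphism $R\to X\times X$ such that $\mathcal C(U,R)$ is an equivalence relation on $\mathcal C(U,X)$ for all $U$. The kernel pair of $f\colon X\to Y$ is the pullback $X\times_YX\to X\times X$. A regular category is Barr exact if every categorical equivalence relation is a kernel pair. *)

theory Defs
  imports Complex_Main "HOL-Library.FuncSet"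
begin

record ('o, 'm) category =
  Ob :: "'o set"
  Ar :: "'m set"
  cdom :: "'m \<Rightarrow> 'o"
  ccod :: "'m \<Rightarrow> 'o"
  cid :: "'o \<Rightarrow> 'm"
  ccomp :: "'m \<Rightarrow> 'm \<Rightarrow> 'm"   (* ccomp C g f = g o f *)

definition chom :: "('o, 'm) category \<Rightarrow> 'o \<Rightarrow> 'o \<Rightarrow> 'm set" where
  "chom C i j = {u \<in> Ar C. cdom C u = i \<and> ccod C u = j}"

definition is_category :: "('o, 'm) category \<Rightarrow> bool" where
  "is_category C \<longleftrightarrow>
     (\<forall>u\<in>Ar C. cdom C u \<in> Ob C \<and> ccod C u \<in> Ob C) \<and>
     (\<forall>i\<in>Ob C. cid C i \<in> chom C i i) \<and>
     (\<forall>u\<in>Ar C. \<forall>v\<in>Ar C. ccod C u = cdom C v \<longrightarrow>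
         ccomp C v u \<in> chom C (cdom C u) (ccod C v)) \<and>
     (\<forall>u\<in>Ar C. ccomp C (cid C (ccod C u)) u = u \<and> ccomp C u (cid C (cdom C u)) = u) \<and>
     (\<forall>u\<in>Ar C. \<forall>v\<in>Ar C. \<forall>w\<in>Ar C. ccod C u = cdom C v \<longrightarrow> ccod C v = cdom C w \<longrightarrow>
         ccomp C w (ccomp C v u) = ccomp C (ccomp C w v) u)"

definition is_filtered :: "('o, 'm) category \<Rightarrow> bool" where
  "is_filtered C \<longleftrightarrow> is_category C \<and> Ob C \<noteq> {} \<and>
     (\<forall>i\<in>Ob C. \<forall>j\<in>Ob C. \<exists>k\<in>Ob C. chom C i k \<noteq> {} \<and> chom C j k \<noteq> {}) \<and>
     (\<forall>i\<in>Ob C. \<forall>j\<in>Ob C. \<forall>u\<in>chom C i j. \<forall>v\<in>chom C i j.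
         \<exists>k\<in>Ob C. \<exists>w\<in>chom C j k. ccomp C w u = ccomp C w v)"

section \<open>Pro-sets: functors I^op -> Set, I small filtered\<close>

record ('o, 'm, 'a) proset =
  idx :: "('o, 'm) category"
  obj :: "'o \<Rightarrow> 'a set"
  amap :: "'m \<Rightarrow> 'a \<Rightarrow> 'a"   (* u : i -> k gives amap u : obj k -> obj i *)

definition is_proset :: "('o, 'm, 'a) proset \<Rightarrow> bool" where
  "is_proset X \<longleftrightarrow> is_filtered (idx X) \<and>
     (\<forall>u\<in>Ar (idx X). amap X u \<in> obj X (ccod (idx X) u) \<rightarrow> obj X (cdom (idx X) u)) \<and>
     (\<forall>i\<in>Ob (idx X). \<forall>x\<in>obj X i. amap X (cid (idx X) i) x = x) \<and>
     (\<forall>u\<in>Ar (idx X). \<forall>v\<in>Ar (idx X). ccod (idx X) u = cdom (idx X) v \<longrightarrow>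
        (\<forall>x\<in>obj X (ccod (idx X) v).
            amap X (ccomp (idx X) v u) x = amap X u (amap X v x)))"

text \<open>Elements of the filtered colimit colim_i Set(X_i, S), represented by
  germs (i, phi); equality of germs in the colimit:\<close>
definition germ_eq :: "('o, 'm, 'a) proset \<Rightarrow> 'o \<times> ('a \<Rightarrow> 'b) \<Rightarrow> 'o \<times> ('a \<Rightarrow> 'b) \<Rightarrow> bool" where
  "germ_eq X g g' \<longleftrightarrow>
     (\<exists>k\<in>Ob (idx X). \<exists>u\<in>chom (idx X) (fst g) k. \<exists>u'\<in>chom (idx X) (fst g') k.
        \<forall>x\<in>obj X k. snd g (amap X u x) = snd g' (amap X u' x))"

text \<open>A representative of an element of Hom(X,Y) = lim_j colim_i Set(X_i,Y_j):
  a compatible family of germs indexed by the objects j of the index of Y.\<close>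
definition is_pmor :: "('o, 'm, 'a) proset \<Rightarrow> ('p, 'q, 'b) proset \<Rightarrow> ('p \<Rightarrow> 'o \<times> ('a \<Rightarrow> 'b)) \<Rightarrow> bool" where
  "is_pmor X Y F \<longleftrightarrow>
     (\<forall>j\<in>Ob (idx Y). fst (F j) \<in> Ob (idx X) \<and> snd (F j) \<in> obj X (fst (F j)) \<rightarrow> obj Y j) \<and>
     (\<forall>v\<in>Ar (idx Y).
        germ_eq X (fst (F (ccod (idx Y) v)), amap Y v \<circ> snd (F (ccod (idx Y) v))) (F (cdom (idx Y) v)))"

definition pmor_eq :: "('o, 'm, 'a) proset \<Rightarrow> ('p, 'q, 'b) proset \<Rightarrow> ('p \<Rightarrow> 'o \<times> ('a \<Rightarrow> 'b)) \<Rightarrow> ('p \<Rightarrow> 'o \<times> ('a \<Rightarrow> 'b)) \<Rightarrow> bool" where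
  "pmor_eq X Y F G \<longleftrightarrow> (\<forall>j\<in>Ob (idx Y). germ_eq X (F j) (G j))"

definition pcomp :: "('r \<Rightarrow> 'p \<times> ('b \<Rightarrow> 'c)) \<Rightarrow> ('p \<Rightarrow> 'o \<times> ('a \<Rightarrow> 'b)) \<Rightarrow> 'r \<Rightarrow> 'o \<times> ('a \<Rightarrow> 'c)" where
  "pcomp G F = (\<lambda>k. (fst (F (fst (G k))), snd (G k) \<circ> snd (F (fst (G k)))))"

definition pid :: "'o \<Rightarrow> 'o \<times> ('a \<Rightarrow> 'a)" where
  "pid = (\<lambda>i. (i, id))"

definition unit_cat :: "(unit, unit) category" where
  "unit_cat = \<lparr>Ob = {()}, Ar = {()}, cdom = (\<lambda>_. ()), ccod = (\<lambda>_. ()),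
               cid = (\<lambda>_. ()), ccomp = (\<lambda>_ _. ())\<rparr>"

definition const_pro :: "'a set \<Rightarrow> (unit, unit, 'a) proset" where
  "const_pro S = \<lparr>idx = unit_cat, obj = (\<lambda>_. S), amap = (\<lambda>_ x. x)\<rparr>"

definition pfst :: "unit \<Rightarrow> unit \<times> ('x \<times> 'x \<Rightarrow> 'x)" where
  "pfst = (\<lambda>_. ((), fst))"
definition psnd :: "unit \<Rightarrow> unit \<times> ('x \<times> 'x \<Rightarrow> 'x)" where
  "psnd = (\<lambda>_. ((), snd))"

text \<open>For m : R -> S x S: Hom(U,m) is injective and its image is an equivalence
  relation on Hom(U,S) (using Hom(U, S x S) = Hom(U,S) x Hom(U,S)).\<close>
definition eqrel_wrt :: "('o, 'm, 'a) proset \<Rightarrow> ('r, 's, 'c) proset \<Rightarrow> 'x set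
     \<Rightarrow> (unit \<Rightarrow> 'r \<times> ('c \<Rightarrow> 'x \<times> 'x)) \<Rightarrow> bool" where
  "eqrel_wrt U Rp S m \<longleftrightarrow>
     (\<forall>r s. is_pmor U Rp r \<longrightarrow> is_pmor U Rp s \<longrightarrow>
        pmor_eq U (const_pro (S \<times> S)) (pcomp m r) (pcomp m s) \<longrightarrow> pmor_eq U Rp r s) \<and>
     (let Rel = (\<lambda>a b. \<exists>r. is_pmor U Rp r \<and>
                   pmor_eq U (const_pro S) (pcomp pfst (pcomp m r)) a \<and>
                   pmor_eq U (const_pro S) (pcomp psnd (pcomp m r)) b);
          H = {a. is_pmor U (const_pro S) a} in
       (\<forall>a\<in>H. Rel a a) \<and>
       (\<forall>a\<in>H. \<forall>b\<in>H. Rel a b \<longrightarrow> Rel b a) \<and>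
       (\<forall>a\<in>H. \<forall>b\<in>H. \<forall>c\<in>H. Rel a b \<longrightarrow> Rel b c \<longrightarrow> Rel a c))"

definition Rcat :: "(nat, nat \<times> nat) category" where
  "Rcat = \<lparr>Ob = {n. 1 \<le> n}, Ar = {(a, b). 1 \<le> a \<and> a \<le> b}, cdom = fst, ccod = snd,
           cid = (\<lambda>n. (n, n)), ccomp = (\<lambda>g f. (fst f, snd g))\<rparr>"

definition Rset :: "nat \<Rightarrow> (real \<times> real) set" where
  "Rset n = {(x, y). x - 1 / real n < y \<and> y < x + 1 / real n}"

definition Rpro :: "(nat, nat \<times> nat, real \<times> real) proset" where
  "Rpro = \<lparr>idx = Rcat, obj = Rset, amap = (\<lambda>_ p. p)\<rparr>"

definition incl :: "unit \<Rightarrow> nat \<times> (real \<times> real \<Rightarrow> real \<times> real)" where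
  "incl = (\<lambda>_. (1, id))"

end

theory Submission
  imports Defs
begin


context
  fixes U :: "('o,'m,'a) proset"
  assumes P: "is_proset U"
begin

lemma cat_dom_ob: "u \<in> chom (idx U) i k \<Longrightarrow> i \<in> Ob (idx U) \<and> k \<in> Ob (idx U)"
  using P unfolding is_proset_def is_filtered_def is_category_def chom_def by auto

lemma cat_comp: "u \<in> chom (idx U) i j \<Longrightarrow> v \<in> chom (idx U) j k \<Longrightarrow> ccomp (idx U) v u \<in> chom (idx U) i k"
  using P unfolding is_proset_def is_filtered_def is_category_def chom_def by auto

lemma cat_id: "i \<in> Ob (idx U) \<Longrightarrow> cid (idx U) i \<in> chom (idx U) i i"
  using P unfolding is_proset_def is_filtered_def is_category_def chom_def by auto

lemma amap_in: "u \<in> chom (idx U) i k \<Longrightarrow> x \<in> obj U k \<Longrightarrow> amap U u x \<in> obj U i"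
  using P unfolding is_proset_def chom_def by auto

lemma amap_comp: "u \<in> chom (idx U) i j \<Longrightarrow> v \<in> chom (idx U) j k \<Longrightarrow> x \<in> obj U k \<Longrightarrow>
        amap U (ccomp (idx U) v u) x = amap U u (amap U v x)"
  using P unfolding is_proset_def chom_def by auto

lemma amap_id: "i \<in> Ob (idx U) \<Longrightarrow> x \<in> obj U i \<Longrightarrow> amap U (cid (idx U) i) x = x"
  using P unfolding is_proset_def by auto

lemma filt_cocone: "i \<in> Ob (idx U) \<Longrightarrow> j \<in> Ob (idx U) \<Longrightarrow>
   \<exists>k\<in>Ob (idx U). \<exists>a b. a \<in> chom (idx U) i k \<and> b \<in> chom (idx U) j k"
  using P unfolding is_proset_def is_filtered_def by blast

lemma filt_eq: "u \<in> chom (idx U) i j \<Longrightarrow> v \<in> chom (idx U) i j \<Longrightarrow>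
         \<exists>k\<in>Ob (idx U). \<exists>w\<in>chom (idx U) j k. ccomp (idx U) w u = ccomp (idx U) w v"
proof -
  assume a: "u \<in> chom (idx U) i j" "v \<in> chom (idx U) i j"
  have "i \<in> Ob (idx U)" "j \<in> Ob (idx U)" using cat_dom_ob[OF a(1)] by auto
  then show ?thesis using a P unfolding is_proset_def is_filtered_def by blast
qed

definition agree where
  "agree \<phi> \<psi> k u u' \<longleftrightarrow> (\<forall>x\<in>obj U k. \<phi> (amap U u x) = \<psi> (amap U u' x))"

lemma germ_eq_agree: "germ_eq U g g' \<longleftrightarrow>
  (\<exists>k\<in>Ob (idx U). \<exists>u\<in>chom (idx U) (fst g) k. \<exists>u'\<in>chom (idx U) (fst g') k. agree (snd g) (snd g') k u u')"
  unfolding germ_eq_def agree_def by blast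

lemma agree_push:
  assumes "agree \<phi> \<psi> k u u'" "u \<in> chom (idx U) i k" "u' \<in> chom (idx U) i' k" "a \<in> chom (idx U) k m"
  shows "agree \<phi> \<psi> m (ccomp (idx U) a u) (ccomp (idx U) a u')"
  unfolding agree_def
proof
  fix x assume x: "x \<in> obj U m"
  have ax: "amap U a x \<in> obj U k" using amap_in[OF assms(4) x] .
  show "\<phi> (amap U (ccomp (idx U) a u) x) = \<psi> (amap U (ccomp (idx U) a u') x)"
    using amap_comp[OF assms(2,4) x] amap_comp[OF assms(3,4) x] assms(1) ax
    unfolding agree_def by simp
qed

lemma germ_sym: "germ_eq U g g' \<Longrightarrow> germ_eq U g' g"
proof -
  assume "germ_eq U g g'"
  then obtain k u u' where "k\<in>Ob (idx U)" "u\<in>chom (idx U) (fst g) k" "u'\<in>chom (idx U) (fst g') k"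
    "\<forall>x\<in>obj U k. snd g (amap U u x) = snd g' (amap U u' x)" unfolding germ_eq_def by blast
  then show ?thesis unfolding germ_eq_def by metis
qed

lemma germ_trans:
  assumes "germ_eq U g1 g2" "germ_eq U g2 g3"
  shows "germ_eq U g1 g3"
proof -
  obtain k u1 u2 where k: "k \<in> Ob (idx U)" "u1 \<in> chom (idx U) (fst g1) k" "u2 \<in> chom (idx U) (fst g2) k"
     "agree (snd g1) (snd g2) k u1 u2" using assms(1) unfolding germ_eq_agree by blast
  obtain k' v2 v3 where k': "k' \<in> Ob (idx U)" "v2 \<in> chom (idx U) (fst g2) k'" "v3 \<in> chom (idx U) (fst g3) k'"
     "agree (snd g2) (snd g3) k' v2 v3" using assms(2) unfolding germ_eq_agree by blast
  obtain m a b where m: "m \<in> Ob (idx U)" "a \<in> chom (idx U) k m" "b \<in> chom (idx U) k' m"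
    using filt_cocone[OF k(1) k'(1)] by blast
  have c1: "ccomp (idx U) a u2 \<in> chom (idx U) (fst g2) m" using cat_comp k m by blast
  have c2: "ccomp (idx U) b v2 \<in> chom (idx U) (fst g2) m" using cat_comp k' m by blast
  obtain m' w where w: "m' \<in> Ob (idx U)" "w \<in> chom (idx U) m m'"
    "ccomp (idx U) w (ccomp (idx U) a u2) = ccomp (idx U) w (ccomp (idx U) b v2)"
    using filt_eq[OF c1 c2] by blast
  have A1: "agree (snd g1) (snd g2) m (ccomp (idx U) a u1) (ccomp (idx U) a u2)"
    using agree_push k m by blast
  have A2: "agree (snd g2) (snd g3) m (ccomp (idx U) b v2) (ccomp (idx U) b v3)"
    using agree_push k' m by blast
  have d1: "ccomp (idx U) a u1 \<in> chom (idx U) (fst g1) m" using cat_comp k m by blast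
  have d3: "ccomp (idx U) b v3 \<in> chom (idx U) (fst g3) m" using cat_comp k' m by blast
  have B1: "agree (snd g1) (snd g2) m' (ccomp (idx U) w (ccomp (idx U) a u1)) (ccomp (idx U) w (ccomp (idx U) a u2))"
    using agree_push[OF A1 d1 c1 w(2)] .
  have B2: "agree (snd g2) (snd g3) m' (ccomp (idx U) w (ccomp (idx U) b v2)) (ccomp (idx U) w (ccomp (idx U) b v3))"
    using agree_push[OF A2 c2 d3 w(2)] .
  have "agree (snd g1) (snd g3) m' (ccomp (idx U) w (ccomp (idx U) a u1)) (ccomp (idx U) w (ccomp (idx U) b v3))"
    using B1 B2 w(3) unfolding agree_def by simp
  moreover have "ccomp (idx U) w (ccomp (idx U) a u1) \<in> chom (idx U) (fst g1) m'"
    using cat_comp d1 w by blast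
  moreover have "ccomp (idx U) w (ccomp (idx U) b v3) \<in> chom (idx U) (fst g3) m'"
    using cat_comp d3 w by blast
  ultimately show ?thesis unfolding germ_eq_agree using w(1) by blast
qed

lemma germ_post: "germ_eq U g g' \<Longrightarrow> germ_eq U (fst g, h \<circ> snd g) (fst g', h \<circ> snd g')"
  unfolding germ_eq_def by simp metis

lemma germ_restrict:
  assumes "u \<in> chom (idx U) i k" "\<forall>x\<in>obj U k. \<psi> x = \<phi> (amap U u x)"
  shows "germ_eq U (k, \<psi>) (i, \<phi>)"
proof -
  have k: "k \<in> Ob (idx U)" using cat_dom_ob assms(1) by blast
  show ?thesis unfolding germ_eq_def using k cat_id[OF k] assms amap_id[OF k]
    by (intro bexI[of _ k] bexI[of _ "cid (idx U) k"] bexI[of _ u]) auto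
qed

lemma germ_refl: "i \<in> Ob (idx U) \<Longrightarrow> germ_eq U (i, \<phi>) (i, \<phi>)"
  using germ_restrict[OF cat_id, of i \<phi> \<phi>] amap_id by simp

lemma germ_pair:
  assumes "germ_eq U (i, fst \<circ> F) (i', fst \<circ> G)" "germ_eq U (i, snd \<circ> F) (i', snd \<circ> G)"
  shows "germ_eq U (i, F) (i', G)"
proof -
  obtain k1 u1 u1' where k1: "k1 \<in> Ob (idx U)" "u1 \<in> chom (idx U) i k1" "u1' \<in> chom (idx U) i' k1"
     "agree (fst \<circ> F) (fst \<circ> G) k1 u1 u1'" using assms(1) unfolding germ_eq_agree by auto
  obtain k2 u2 u2' where k2: "k2 \<in> Ob (idx U)" "u2 \<in> chom (idx U) i k2" "u2' \<in> chom (idx U) i' k2"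
     "agree (snd \<circ> F) (snd \<circ> G) k2 u2 u2'" using assms(2) unfolding germ_eq_agree by auto
  obtain m a b where m: "m \<in> Ob (idx U)" "a \<in> chom (idx U) k1 m" "b \<in> chom (idx U) k2 m"
    using filt_cocone[OF k1(1) k2(1)] by blast
  define p1 where "p1 = ccomp (idx U) a u1"
  define p1' where "p1' = ccomp (idx U) a u1'"
  define p2 where "p2 = ccomp (idx U) b u2"
  define p2' where "p2' = ccomp (idx U) b u2'"
  have p: "p1 \<in> chom (idx U) i m" "p1' \<in> chom (idx U) i' m" "p2 \<in> chom (idx U) i m" "p2' \<in> chom (idx U) i' m"
    unfolding p1_def p1'_def p2_def p2'_def using cat_comp k1 k2 m by blast+
  have A1: "agree (fst \<circ> F) (fst \<circ> G) m p1 p1'" unfolding p1_def p1'_def using agree_push k1 m by blast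
  have A2: "agree (snd \<circ> F) (snd \<circ> G) m p2 p2'" unfolding p2_def p2'_def using agree_push k2 m by blast
  obtain m1 w where w: "m1 \<in> Ob (idx U)" "w \<in> chom (idx U) m m1"
    "ccomp (idx U) w p1 = ccomp (idx U) w p2" using filt_eq[OF p(1) p(3)] by blast
  define q where "q = ccomp (idx U) w p1"
  define q1' where "q1' = ccomp (idx U) w p1'"
  define q2' where "q2' = ccomp (idx U) w p2'"
  have q: "q \<in> chom (idx U) i m1" "q1' \<in> chom (idx U) i' m1" "q2' \<in> chom (idx U) i' m1"
    unfolding q_def q1'_def q2'_def using cat_comp p w by blast+
  have B1: "agree (fst \<circ> F) (fst \<circ> G) m1 q q1'" unfolding q_def q1'_def using agree_push[OF A1 p(1,2) w(2)] .
  have B2: "agree (snd \<circ> F) (snd \<circ> G) m1 q q2'" unfolding q_def q2'_def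
    using agree_push[OF A2 p(3,4) w(2)] w(3) by simp
  obtain m2 w' where w': "m2 \<in> Ob (idx U)" "w' \<in> chom (idx U) m1 m2"
    "ccomp (idx U) w' q1' = ccomp (idx U) w' q2'" using filt_eq[OF q(2) q(3)] by blast
  have C1: "agree (fst \<circ> F) (fst \<circ> G) m2 (ccomp (idx U) w' q) (ccomp (idx U) w' q1')"
    using agree_push[OF B1 q(1,2) w'(2)] .
  have C2: "agree (snd \<circ> F) (snd \<circ> G) m2 (ccomp (idx U) w' q) (ccomp (idx U) w' q1')"
    using agree_push[OF B2 q(1,3) w'(2)] w'(3) by simp
  have "agree F G m2 (ccomp (idx U) w' q) (ccomp (idx U) w' q1')"
    using C1 C2 unfolding agree_def by (simp add: prod_eq_iff)
  moreover have "ccomp (idx U) w' q \<in> chom (idx U) i m2" "ccomp (idx U) w' q1' \<in> chom (idx U) i' m2"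
    using cat_comp q w' by blast+
  ultimately show ?thesis unfolding germ_eq_agree using w'(1) by auto
qed

end



lemma id_lam_comp[simp]: "(\<lambda>p. p) \<circ> f = f" by (simp add: comp_def)

lemma Rset_mono: "1 \<le> a \<Longrightarrow> a \<le> b \<Longrightarrow> Rset b \<subseteq> Rset a"
proof
  fix p assume ab: "1 \<le> a" "a \<le> b" and p: "p \<in> Rset b"
  have "1 / real b \<le> 1 / real a" using ab by (simp add: frac_le)
  then show "p \<in> Rset a" using p unfolding Rset_def by auto
qed

lemma Rset_diag: "1 \<le> j \<Longrightarrow> (x, x) \<in> Rset j"
  unfolding Rset_def by auto

lemma Rset_swap: "(x, y) \<in> Rset j \<Longrightarrow> (y, x) \<in> Rset j"
  unfolding Rset_def by auto

lemma Rset_half: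
  assumes "1 \<le> j" "(p1, p2) \<in> Rset (2*j)" "(p2, q2) \<in> Rset (2*j)"
  shows "(p1, q2) \<in> Rset j"
proof -
  have "1 / real (2*j) + 1 / real (2*j) = 1 / real j" using assms(1) by (simp add: field_simps)
  then show ?thesis using assms unfolding Rset_def by auto
qed

lemma is_proset_Rpro: "is_proset Rpro"
  unfolding is_proset_def is_filtered_def is_category_def Rpro_def Rcat_def chom_def
  apply (auto simp: Pi_iff)
  subgoal for i j by (rule exI[of _ "max i j"]) auto
  subgoal using Rset_mono by (metis One_nat_def subsetD)
  done

lemma is_pmor_Rpro: "is_pmor U Rpro r \<longleftrightarrow>
   (\<forall>j. 1 \<le> j \<longrightarrow> fst (r j) \<in> Ob (idx U) \<and> snd (r j) \<in> obj U (fst (r j)) \<rightarrow> Rset j) \<and>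
   (\<forall>a b. 1 \<le> a \<and> a \<le> b \<longrightarrow> germ_eq U (r b) (r a))"
  unfolding is_pmor_def Rpro_def Rcat_def by auto

lemma pmor_eq_Rpro: "pmor_eq U Rpro r s \<longleftrightarrow> (\<forall>j. 1 \<le> j \<longrightarrow> germ_eq U (r j) (s j))"
  unfolding pmor_eq_def Rpro_def Rcat_def by auto

lemma pmor_eq_const: "pmor_eq U (const_pro S) F G \<longleftrightarrow> germ_eq U (F ()) (G ())"
  unfolding pmor_eq_def const_pro_def unit_cat_def by auto

lemma pcomp_incl: "pcomp incl r = (\<lambda>_. r 1)"
  unfolding pcomp_def incl_def by auto

lemma pcomp_pfst: "pcomp pfst (\<lambda>_. g) = (\<lambda>_. (fst g, fst \<circ> snd g))"
  unfolding pcomp_def pfst_def by auto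

lemma pcomp_psnd: "pcomp psnd (\<lambda>_. g) = (\<lambda>_. (fst g, snd \<circ> snd g))"
  unfolding pcomp_def psnd_def by auto



lemma eqrel_main:
  fixes U :: "('o,'m,'a) proset"
  assumes P: "is_proset U"
  shows "eqrel_wrt U Rpro (UNIV :: real set) incl"
proof -
  define Rel where "Rel = (\<lambda>a b. \<exists>r. is_pmor U Rpro r \<and>
                   pmor_eq U (const_pro (UNIV::real set)) (pcomp pfst (pcomp incl r)) a \<and>
                   pmor_eq U (const_pro (UNIV::real set)) (pcomp psnd (pcomp incl r)) b)"
  have Rel_iff: "Rel a b \<longleftrightarrow> (\<exists>r. is_pmor U Rpro r \<and>
       germ_eq U (fst (r 1), fst \<circ> snd (r 1)) (a ()) \<and> germ_eq U (fst (r 1), snd \<circ> snd (r 1)) (b ()))"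
    for a b unfolding Rel_def pcomp_incl pcomp_pfst pcomp_psnd pmor_eq_const by simp
  have mono: "pmor_eq U Rpro r s"
    if r: "is_pmor U Rpro r" and s: "is_pmor U Rpro s"
      and e: "pmor_eq U (const_pro (UNIV \<times> UNIV)) (pcomp incl r) (pcomp incl s)" for r s
  proof -
    have e1: "germ_eq U (r 1) (s 1)" using e unfolding pcomp_incl pmor_eq_const by simp
    show ?thesis unfolding pmor_eq_Rpro
    proof (intro allI impI)
      fix j :: nat assume j: "1 \<le> j"
      have "germ_eq U (r j) (r 1)" "germ_eq U (s j) (s 1)"
        using r s j unfolding is_pmor_Rpro by auto
      then show "germ_eq U (r j) (s j)" using germ_trans[OF P germ_trans[OF P _ e1] germ_sym[OF P]] by blast
    qed
  qed
  have refl: "Rel a a" if a: "is_pmor U (const_pro UNIV) a" for a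
  proof -
    obtain i \<phi> where ai: "a () = (i, \<phi>)" by fastforce
    have i: "i \<in> Ob (idx U)" using a ai unfolding is_pmor_def const_pro_def unit_cat_def by auto
    define r :: "nat \<Rightarrow> 'o \<times> ('a \<Rightarrow> real \<times> real)" where "r = (\<lambda>_. (i, \<lambda>x. (\<phi> x, \<phi> x)))"
    have "is_pmor U Rpro r" unfolding is_pmor_Rpro r_def
      using i Rset_diag germ_refl[OF P i] by auto
    moreover have "fst \<circ> snd (r 1) = \<phi>" "snd \<circ> snd (r 1) = \<phi>" unfolding r_def by auto
    ultimately show ?thesis unfolding Rel_iff ai using germ_refl[OF P i]
      by (intro exI[of _ r]) (simp add: r_def)
  qed
  have sym: "Rel b a" if hab: "Rel a b" for a b
  proof -
    obtain r where r: "is_pmor U Rpro r" "germ_eq U (fst (r 1), fst \<circ> snd (r 1)) (a ())"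
      "germ_eq U (fst (r 1), snd \<circ> snd (r 1)) (b ())" using hab unfolding Rel_iff by blast
    define r' where "r' = (\<lambda>j. (fst (r j), prod.swap \<circ> snd (r j)))"
    have A: "\<forall>j. 1 \<le> j \<longrightarrow> fst (r' j) \<in> Ob (idx U) \<and> snd (r' j) \<in> obj U (fst (r' j)) \<rightarrow> Rset j"
    proof (intro allI impI)
      fix j :: nat assume j: "1 \<le> j"
      then have h: "fst (r j) \<in> Ob (idx U) \<and> snd (r j) \<in> obj U (fst (r j)) \<rightarrow> Rset j"
        using r(1) unfolding is_pmor_Rpro by blast
      have sw: "prod.swap p \<in> Rset j" if "p \<in> Rset j" for p
        using Rset_swap[of "fst p" "snd p" j] that by (cases p) simp
      show "fst (r' j) \<in> Ob (idx U) \<and> snd (r' j) \<in> obj U (fst (r' j)) \<rightarrow> Rset j"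
        unfolding r'_def using h sw by (simp add: Pi_iff)
    qed
    have B: "\<forall>a b. 1 \<le> a \<and> a \<le> b \<longrightarrow> germ_eq U (r' b) (r' a)"
    proof (intro allI impI)
      fix a b :: nat assume "1 \<le> a \<and> a \<le> b"
      then have "germ_eq U (r b) (r a)" using r(1) unfolding is_pmor_Rpro by blast
      then show "germ_eq U (r' b) (r' a)" unfolding r'_def by (rule germ_post[OF P])
    qed
    have "is_pmor U Rpro r'" unfolding is_pmor_Rpro using A B by blast
    moreover have "fst \<circ> snd (r' 1) = snd \<circ> snd (r 1)" "snd \<circ> snd (r' 1) = fst \<circ> snd (r 1)"
      unfolding r'_def by auto
    ultimately show ?thesis unfolding Rel_iff using r r'_def by auto
  qed
  have trans: "Rel a c" if ab: "Rel a b" and bc: "Rel b c" for a b c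
  proof -
    obtain r where r: "is_pmor U Rpro r" "germ_eq U (fst (r 1), fst \<circ> snd (r 1)) (a ())"
      "germ_eq U (fst (r 1), snd \<circ> snd (r 1)) (b ())" using ab unfolding Rel_iff by blast
    obtain s where s: "is_pmor U Rpro s" "germ_eq U (fst (s 1), fst \<circ> snd (s 1)) (b ())"
      "germ_eq U (fst (s 1), snd \<circ> snd (s 1)) (c ())" using bc unfolding Rel_iff by blast
    have rr: "germ_eq U (r m) (r n)" "germ_eq U (s m) (s n)" if "1 \<le> n" "n \<le> m" for n m
      using r(1) s(1) that unfolding is_pmor_Rpro by auto
    have rdom: "fst (r j) \<in> Ob (idx U) \<and> snd (r j) \<in> obj U (fst (r j)) \<rightarrow> Rset j"
      "fst (s j) \<in> Ob (idx U) \<and> snd (s j) \<in> obj U (fst (s j)) \<rightarrow> Rset j" if "1 \<le> j" for j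
      using r(1) s(1) that unfolding is_pmor_Rpro by auto
    define Q where "Q = (\<lambda>j t. fst t \<in> Ob (idx U) \<and> snd t \<in> obj U (fst t) \<rightarrow> Rset j \<and>
        germ_eq U (fst t, fst \<circ> snd t) (fst (r (2*j)), fst \<circ> snd (r (2*j))) \<and>
        germ_eq U (fst t, snd \<circ> snd t) (fst (s (2*j)), snd \<circ> snd (s (2*j))))"
    have ex: "\<exists>t. Q j t" if j: "1 \<le> j" for j
    proof -
      have j2: "1 \<le> 2*j" using j by simp
      have g1: "germ_eq U (fst (r (2*j)), snd \<circ> snd (r (2*j))) (fst (r 1), snd \<circ> snd (r 1))"
        using germ_post[OF P rr(1)[of 1 "2*j"]] j by simp
      have g2: "germ_eq U (fst (s 1), fst \<circ> snd (s 1)) (fst (s (2*j)), fst \<circ> snd (s (2*j)))"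
        using germ_post[OF P germ_sym[OF P rr(2)[of 1 "2*j"]]] j by simp
      have "germ_eq U (fst (r (2*j)), snd \<circ> snd (r (2*j))) (fst (s (2*j)), fst \<circ> snd (s (2*j)))"
        using germ_trans[OF P germ_trans[OF P germ_trans[OF P g1 r(3)] germ_sym[OF P s(2)]] g2] .
      then obtain k u u' where k: "k \<in> Ob (idx U)" "u \<in> chom (idx U) (fst (r (2*j))) k"
        "u' \<in> chom (idx U) (fst (s (2*j))) k"
        "\<forall>x\<in>obj U k. snd (snd (r (2*j)) (amap U u x)) = fst (snd (s (2*j)) (amap U u' x))"
        unfolding germ_eq_def by auto
      define t where "t = (k, \<lambda>x. (fst (snd (r (2*j)) (amap U u x)), snd (snd (s (2*j)) (amap U u' x))))"
      have "snd t \<in> obj U (fst t) \<rightarrow> Rset j"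
      proof
        fix x assume x: "x \<in> obj U (fst t)"
        have "amap U u x \<in> obj U (fst (r (2*j)))" "amap U u' x \<in> obj U (fst (s (2*j)))"
          using amap_in[OF P k(2)] amap_in[OF P k(3)] x t_def by auto
        then have m1: "snd (r (2*j)) (amap U u x) \<in> Rset (2*j)" and m2: "snd (s (2*j)) (amap U u' x) \<in> Rset (2*j)"
          using rdom[OF j2] by auto
        have eq: "snd (snd (r (2*j)) (amap U u x)) = fst (snd (s (2*j)) (amap U u' x))"
          using k(4) x t_def by auto
        have gen: "(fst p, snd q) \<in> Rset j" if "p \<in> Rset (2*j)" "q \<in> Rset (2*j)" "snd p = fst q" for p q
          using Rset_half[OF j, of "fst p" "snd p" "snd q"] that by (cases p, cases q) simp
        show "snd t x \<in> Rset j" unfolding t_def using gen[OF m1 m2 eq] by simp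
      qed
      moreover have "germ_eq U (fst t, fst \<circ> snd t) (fst (r (2*j)), fst \<circ> snd (r (2*j)))"
        unfolding t_def fst_conv snd_conv by (rule germ_restrict[OF P k(2)]) simp
      moreover have "germ_eq U (fst t, snd \<circ> snd t) (fst (s (2*j)), snd \<circ> snd (s (2*j)))"
        unfolding t_def fst_conv snd_conv by (rule germ_restrict[OF P k(3)]) simp
      ultimately show ?thesis unfolding Q_def using k(1) t_def by auto
    qed
    have "\<forall>j. \<exists>t. 1 \<le> j \<longrightarrow> Q j t" using ex by blast
    then obtain T where T0: "\<forall>j. 1 \<le> j \<longrightarrow> Q j (T j)" by (metis choice)
    have T: "Q j (T j)" if "1 \<le> j" for j using T0 that by blast
    have TA: "\<forall>j. 1 \<le> j \<longrightarrow> fst (T j) \<in> Ob (idx U) \<and> snd (T j) \<in> obj U (fst (T j)) \<rightarrow> Rset j"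
    proof (intro allI impI)
      fix j :: nat assume "1 \<le> j"
      then show "fst (T j) \<in> Ob (idx U) \<and> snd (T j) \<in> obj U (fst (T j)) \<rightarrow> Rset j"
        using T unfolding Q_def by blast
    qed
    have TB: "\<forall>n m. 1 \<le> n \<and> n \<le> m \<longrightarrow> germ_eq U (T m) (T n)"
    proof (intro allI impI)
      fix n m :: nat assume nm: "1 \<le> n \<and> n \<le> m"
      have Tn: "Q n (T n)" "Q m (T m)" using T nm by auto
      have "germ_eq U (fst (T m), fst \<circ> snd (T m)) (fst (T n), fst \<circ> snd (T n))"
      proof -
        have "germ_eq U (fst (r (2*m)), fst \<circ> snd (r (2*m))) (fst (r (2*n)), fst \<circ> snd (r (2*n)))"
          using germ_post[OF P rr(1)[of "2*n" "2*m"]] nm by simp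
        moreover have "germ_eq U (fst (T m), fst \<circ> snd (T m)) (fst (r (2*m)), fst \<circ> snd (r (2*m)))"
          "germ_eq U (fst (T n), fst \<circ> snd (T n)) (fst (r (2*n)), fst \<circ> snd (r (2*n)))"
          using Tn unfolding Q_def by blast+
        ultimately show ?thesis using germ_trans[OF P germ_trans[OF P] germ_sym[OF P]] by blast
      qed
      moreover have "germ_eq U (fst (T m), snd \<circ> snd (T m)) (fst (T n), snd \<circ> snd (T n))"
      proof -
        have "germ_eq U (fst (s (2*m)), snd \<circ> snd (s (2*m))) (fst (s (2*n)), snd \<circ> snd (s (2*n)))"
          using germ_post[OF P rr(2)[of "2*n" "2*m"]] nm by simp
        moreover have "germ_eq U (fst (T m), snd \<circ> snd (T m)) (fst (s (2*m)), snd \<circ> snd (s (2*m)))"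
          "germ_eq U (fst (T n), snd \<circ> snd (T n)) (fst (s (2*n)), snd \<circ> snd (s (2*n)))"
          using Tn unfolding Q_def by blast+
        ultimately show ?thesis using germ_trans[OF P germ_trans[OF P] germ_sym[OF P]] by blast
      qed
      ultimately show "germ_eq U (T m) (T n)" using germ_pair[OF P, of "fst (T m)" "snd (T m)" "fst (T n)" "snd (T n)"] by simp
    qed
    have Tp: "is_pmor U Rpro T" unfolding is_pmor_Rpro using TA TB by blast
    have T1: "Q 1 (T 1)" using T by simp
    have "germ_eq U (fst (r 2), fst \<circ> snd (r 2)) (fst (r 1), fst \<circ> snd (r 1))"
      using germ_post[OF P rr(1)[of 1 2]] by simp
    moreover have "germ_eq U (fst (T 1), fst \<circ> snd (T 1)) (fst (r 2), fst \<circ> snd (r 2))"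
      using T1 unfolding Q_def by simp
    ultimately have ga: "germ_eq U (fst (T 1), fst \<circ> snd (T 1)) (a ())"
      using germ_trans[OF P germ_trans[OF P] r(2)] by blast
    have "germ_eq U (fst (s 2), snd \<circ> snd (s 2)) (fst (s 1), snd \<circ> snd (s 1))"
      using germ_post[OF P rr(2)[of 1 2]] by simp
    moreover have "germ_eq U (fst (T 1), snd \<circ> snd (T 1)) (fst (s 2), snd \<circ> snd (s 2))"
      using T1 unfolding Q_def by simp
    ultimately have gc: "germ_eq U (fst (T 1), snd \<circ> snd (T 1)) (c ())"
      using germ_trans[OF P germ_trans[OF P] s(3)] by blast
    show ?thesis unfolding Rel_iff using Tp ga gc by blast
  qed
  show ?thesis unfolding eqrel_wrt_def Let_def Rel_def[symmetric]
    apply (intro conjI)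
    subgoal using mono by blast
    subgoal using refl by blast
    subgoal using sym by blast
    subgoal using trans by blast
    done
qed



lemma loc_const:
  fixes h :: "real \<Rightarrow> 'b" and d :: real
  assumes d: "d > 0" and H: "\<And>x y. \<bar>x - y\<bar> < d \<Longrightarrow> h x = h y"
  shows "h x = h y"
proof -
  have step: "\<forall>x y. \<bar>x - y\<bar> < real n * (d/2) \<longrightarrow> h x = h y" for n
  proof (induction n)
    case 0 then show ?case by simp
  next
    case (Suc n)
    show ?case
    proof (intro allI impI)
      fix x y :: real assume xy: "\<bar>x - y\<bar> < real (Suc n) * (d/2)"
      show "h x = h y"
      proof (cases "\<bar>x - y\<bar> < d/2")
        case True then show ?thesis using H d by simp
      next
        case False
        define z where "z = (if x \<le> y then x + d/2 else x - d/2)"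
        have "\<bar>x - z\<bar> < d" using d unfolding z_def by auto
        then have 1: "h x = h z" using H by blast
        have "\<bar>z - y\<bar> < real n * (d/2)" using False xy d unfolding z_def
          by (auto simp: algebra_simps abs_if split: if_splits)
        then have "h z = h y" using Suc.IH by blast
        then show ?thesis using 1 by simp
      qed
    qed
  qed
  obtain n :: nat where "\<bar>x - y\<bar> / (d/2) < real n" using reals_Archimedean2 by blast
  then have "\<bar>x - y\<bar> < real n * (d/2)" using d by (simp add: field_simps)
  then show ?thesis using step by blast
qed

lemma germ_eq_Rpro_1: "germ_eq Rpro (1, \<phi>) (1, \<psi>) \<Longrightarrow> \<exists>k\<ge>1. \<forall>p\<in>Rset k. \<phi> p = \<psi> p"
  unfolding germ_eq_def Rpro_def Rcat_def chom_def by auto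

lemma part4:
  fixes f :: "'p \<Rightarrow> unit \<times> (real \<Rightarrow> 'b)" and X :: "('p, 'q, 'b) proset"
  assumes H: "pmor_eq Rpro X (pcomp f (pcomp pfst incl)) (pcomp f (pcomp psnd incl))"
  shows "pmor_eq (const_pro (UNIV :: (real \<times> real) set)) X (pcomp f pfst) (pcomp f psnd)"
  unfolding pmor_eq_def
proof
  fix j assume j: "j \<in> Ob (idx X)"
  define h where "h = snd (f j)"
  have "germ_eq Rpro (1, h \<circ> fst) (1, h \<circ> snd)"
    using H j unfolding pmor_eq_def pcomp_def pfst_def psnd_def incl_def h_def by auto
  then obtain k :: nat where k: "k \<ge> 1" "\<forall>p\<in>Rset k. h (fst p) = h (snd p)"
    using germ_eq_Rpro_1 by fastforce
  have "h x = h y" for x y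
  proof (rule loc_const[of "1 / real k"])
    show "0 < 1 / real k" using k by simp
    fix x y :: real assume "\<bar>x - y\<bar> < 1 / real k"
    then have "(x, y) \<in> Rset k" unfolding Rset_def by auto
    then show "h x = h y" using k by auto
  qed
  then show "germ_eq (const_pro UNIV) (pcomp f pfst j) (pcomp f psnd j)"
    unfolding germ_eq_def pcomp_def pfst_def psnd_def const_pro_def unit_cat_def chom_def h_def
    by auto
qed

lemma part5:
  "\<not> (\<exists>g. is_pmor (const_pro (UNIV :: (real \<times> real) set)) Rpro g
            \<and> pmor_eq (const_pro (UNIV :: (real \<times> real) set)) (const_pro (UNIV :: (real \<times> real) set))
                 (pcomp incl g) pid
            \<and> pmor_eq Rpro Rpro (pcomp g incl) pid)"
proof
  assume "\<exists>g. is_pmor (const_pro (UNIV :: (real \<times> real) set)) Rpro g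
            \<and> pmor_eq (const_pro (UNIV :: (real \<times> real) set)) (const_pro (UNIV :: (real \<times> real) set))
                 (pcomp incl g) pid
            \<and> pmor_eq Rpro Rpro (pcomp g incl) pid"
  then obtain g where g: "is_pmor (const_pro (UNIV :: (real \<times> real) set)) Rpro g"
    "pmor_eq (const_pro (UNIV :: (real \<times> real) set)) (const_pro (UNIV :: (real \<times> real) set))
                 (pcomp incl g) pid" by blast
  have m: "snd (g 1) p \<in> Rset 1" for p
    using g(1) unfolding is_pmor_def Rpro_def Rcat_def const_pro_def by auto
  have "germ_eq (const_pro (UNIV :: (real \<times> real) set)) (g 1) ((), id)"
    using g(2) unfolding pmor_eq_const pcomp_incl pid_def by simp
  then have "snd (g 1) p = p" for p
    unfolding germ_eq_def const_pro_def unit_cat_def by (cases p) auto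
  then have "((0::real), (5::real)) \<in> Rset 1" using m by metis
  then show False unfolding Rset_def by simp
qed

lemma part2: "is_pmor Rpro (const_pro (UNIV :: (real \<times> real) set)) incl"
  unfolding is_pmor_def germ_eq_def Rpro_def Rcat_def const_pro_def unit_cat_def incl_def chom_def
  by auto

theorem mainTheorem14:
  fixes U :: "('o, 'm, 'a) proset"
    and X :: "('p, 'q, 'b) proset"
    and f :: "'p \<Rightarrow> unit \<times> (real \<Rightarrow> 'b)"
  shows
    "is_proset Rpro \<and> is_pmor Rpro (const_pro (UNIV :: (real \<times> real) set)) incl
     \<and> (is_proset U \<longrightarrow> eqrel_wrt U Rpro (UNIV :: real set) incl)
     \<and> (is_proset X \<and> is_pmor (const_pro (UNIV :: real set)) X f
         \<and> pmor_eq Rpro X (pcomp f (pcomp pfst incl)) (pcomp f (pcomp psnd incl))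
         \<longrightarrow> pmor_eq (const_pro (UNIV :: (real \<times> real) set)) X (pcomp f pfst) (pcomp f psnd))
     \<and> \<not> (\<exists>g. is_pmor (const_pro (UNIV :: (real \<times> real) set)) Rpro g
            \<and> pmor_eq (const_pro (UNIV :: (real \<times> real) set)) (const_pro (UNIV :: (real \<times> real) set))
                 (pcomp incl g) pid
            \<and> pmor_eq Rpro Rpro (pcomp g incl) pid)"
    using is_proset_Rpro part2 eqrel_main part4 part5 by blast

end
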